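(* Consider a run of the algorithm described in the context, and assume the event $\mathcal E$ occurs. Then for every iteration $j$ of the run, $\mathcal G_j^*:=\mathcal G^*\cap\mathcal G_j\neq\emptyset$, where $\mathcal G^*=\{G\in\mathcal G_{d,k}:\mathcal S(G)=\mathcal S^*\}$.
   Context: Setting. $\mathbf{X}=(X_1,\dots,X_d)$ is a random vector; $k$ a fixed positive integer; natural logarithms. A family is $f=\langle X_i,\Pi\rangle$ with $\Pi\subseteq\{X_1,\dots,X_d\}\setminus\{X_i\}$, $|\Pi|\le k$; $\mathcal F_{d,k}$ the set of families; $H(f)=H(X_i\mid\Pi)$. $\mathcal G_{d,k}$ = DAGs over the variables with in-degree $\le k$, identified with their family sets; $\mathcal S(F)=-\sum_{f\in F}H(f)$; $\mathcal S^*=\max_{G\in\mathcal G_{d,k}}\mathcal S(G)$. $\mathcal E_{d,k}$ is the set of Markov equivalence classes (ECs) on $\mathcal G_{d,k}$ (graphs with identical conditional independence constraints); graphs in an EC share a score. Each sample is an independent copy of $\mathbf X$ of which only a chosen set of $k+1$ coordinates is revealed. $\hat H$ is an estimator of $H(f)$ from the samples where all variables of $f$ were observed, and $N(\epsilon,\delta)$ is such that for any fixed $f$, at least $N(\epsilon,\delta)$ such samples give $|\hat H(f)-H(f)|\le\epsilon$ with probability $\ge1-\delta$. Notation: $\mathcal F_{\mathrm{act}}(\mathcal V)$ = families whose child is not in $\mathcal V\subseteq[d]$; $\mathcal G_j=\{G\in\mathcal G_{d,k}:\mathcal A_j\subseteq G\}$; $E^{(j)}=E\cap\mathcal G_j$;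 $U(\mathcal A)=\bigcup_{G\in\mathcal A}G$; $\hat H_t(f)$ = estimate from all samples up to round $t$; $\hat{\mathcal S}_t(G)=-\sum_{f\in G}\hat H_t(f)$; $\hat{\mathcal S}_t(\mathcal A)=\max_{G\in\mathcal A}\hat{\mathcal S}_t(G)$. Algorithm (inputs $d,k,\delta\in(0,1),\epsilon,\epsilon_1>0$). Initialize $\mathcal A_1=\emptyset,\mathcal V=\emptyset,N_0=0,t=1,j=1,T=\lceil\log_2(2d\epsilon_1/\epsilon)\rceil$. While $\epsilon_t>\epsilon/(d-|\mathcal V|)$ (a "round" $t$): $N_t=N(\epsilon_t/2,\delta/(T|\mathcal F_{\mathrm{act}}(\mathcal V)|))$; observe each $(k+1)$-subset of $[d]$ not contained in $\mathcal V$ in $N_t-N_{t-1}$ new samples; repeat the following "iteration" until $\mathcal A_j=\mathcal A_{j-1}$: $\theta_j=(d-|\mathcal V|)\epsilon_t$; $\hat G_j\in\arg\max_{G\in\mathcal G_j}\hat{\mathcal S}_t(G)$, $\hat E_j$ its EC; $L_j=\{E\in\mathcal E_{d,k}:E^{(j)}\neq\emptyset,\hat{\mathcal S}_t(\hat E_j^{(j)})-\hat{\mathcal S}_t(E^{(j)})\le\theta_j\}$; if some $f\in U(\hat E_j^{(j)})\cap\mathcal F_{\mathrm{act}}(\mathcal V)$ satisfies $f\in U(E^{(j)})$ for all $E\in L_j$, accept one such $f=\langle X_v,\Pi\rangle$: $\mathcal V\leftarrow\mathcal V\cup\{v\}$, $\mathcal A_{j+1}=\mathcal A_j\cup\{f\}$;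 else $\mathcal A_{j+1}=\mathcal A_j$; $j\leftarrow j+1$. After the iterations, if $|\mathcal V|=d$ return $\mathcal A_j$; else $t\leftarrow t+1$, $\epsilon_t=\epsilon_{t-1}/2$. After the while loop: $\epsilon_{\mathrm{last}}=\epsilon/(d-|\mathcal V|)$, $N_T=N(\epsilon_{\mathrm{last}}/2,\delta/(T|\mathcal F_{\mathrm{act}}(\mathcal V)|))$, observe remaining subsets in $N_T-N_{T-1}$ more samples, return a maximizer of $\hat{\mathcal S}_T$ over $\mathcal G_j$. Event: with $\mathcal V_t$ the value of $\mathcal V$ at the start of round $t$, $\mathcal E:=\{\forall t\in[T],\forall f\in\mathcal F_{\mathrm{act}}(\mathcal V_t): |\hat H_t(f)-H(f)|\le\epsilon_t/2\}$. *)

theory Defs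
  imports Complex_Main
begin

text \<open>Variables are indexed by 0..<d. A family (i, P) has child i and parent set P.\<close>
type_synonym fam = "nat \<times> nat set"

definition families :: "nat \<Rightarrow> nat \<Rightarrow> fam set" where
  "families d k = {(i, P). i < d \<and> P \<subseteq> {0..<d} - {i} \<and> card P \<le> k}"

definition edges :: "fam set \<Rightarrow> (nat \<times> nat) set" where
  "edges G = {(p, i). \<exists>P. (i, P) \<in> G \<and> p \<in> P}"

definition dags :: "nat \<Rightarrow> nat \<Rightarrow> fam set set" where
  "dags d k = {G. G \<subseteq> families d k \<and> (\<forall>i<d. \<exists>!P. (i, P) \<in> G) \<and> acyclic (edges G)}"

definition adj :: "fam set \<Rightarrow> nat \<Rightarrow> nat \<Rightarrow> bool" where
  "adj G u v \<longleftrightarrow> (u, v) \<in> edges G \<or> (v, u) \<in> edges G"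

definition collider_at :: "fam set \<Rightarrow> nat list \<Rightarrow> nat \<Rightarrow> bool" where
  "collider_at G p i \<longleftrightarrow> (p ! (i - 1), p ! i) \<in> edges G \<and> (p ! Suc i, p ! i) \<in> edges G"

definition d_connecting :: "fam set \<Rightarrow> nat set \<Rightarrow> nat list \<Rightarrow> bool" where
  "d_connecting G Z p \<longleftrightarrow>
     2 \<le> length p \<and> distinct p \<and>
     (\<forall>i. Suc i < length p \<longrightarrow> adj G (p ! i) (p ! Suc i)) \<and>
     (\<forall>i. 0 < i \<and> Suc i < length p \<longrightarrow>
        (if collider_at G p i then (\<exists>w\<in>Z. (p ! i, w) \<in> (edges G)\<^sup>*) else p ! i \<notin> Z))"

definition d_separated :: "fam set \<Rightarrow> nat set \<Rightarrow> nat set \<Rightarrow> nat set \<Rightarrow> bool" where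
  "d_separated G X Y Z \<longleftrightarrow> \<not> (\<exists>p. d_connecting G Z p \<and> hd p \<in> X \<and> last p \<in> Y)"

definition markov_equiv :: "nat \<Rightarrow> fam set \<Rightarrow> fam set \<Rightarrow> bool" where
  "markov_equiv d G G' \<longleftrightarrow>
     (\<forall>X Y Z. X \<subseteq> {0..<d} \<and> Y \<subseteq> {0..<d} \<and> Z \<subseteq> {0..<d} \<and>
        X \<inter> Y = {} \<and> X \<inter> Z = {} \<and> Y \<inter> Z = {} \<longrightarrow>
        (d_separated G X Y Z \<longleftrightarrow> d_separated G' X Y Z))"

definition ec_of :: "nat \<Rightarrow> nat \<Rightarrow> fam set \<Rightarrow> fam set set" where
  "ec_of d k G = {G' \<in> dags d k. markov_equiv d G G'}"

definition ecs :: "nat \<Rightarrow> nat \<Rightarrow> fam set set set" where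
  "ecs d k = ec_of d k ` dags d k"

text \<open>Score with respect to a family function (true entropies H or estimates).\<close>
definition score :: "(fam \<Rightarrow> real) \<Rightarrow> fam set \<Rightarrow> real" where
  "score H G = - (\<Sum>f\<in>G. H f)"

definition S_star :: "nat \<Rightarrow> nat \<Rightarrow> (fam \<Rightarrow> real) \<Rightarrow> real" where
  "S_star d k H = Max (score H ` dags d k)"

definition G_star :: "nat \<Rightarrow> nat \<Rightarrow> (fam \<Rightarrow> real) \<Rightarrow> fam set set" where
  "G_star d k H = {G \<in> dags d k. score H G = S_star d k H}"

definition F_act :: "nat \<Rightarrow> nat \<Rightarrow> nat set \<Rightarrow> fam set" where
  "F_act d k V = {f \<in> families d k. fst f \<notin> V}"

definition G_j :: "nat \<Rightarrow> nat \<Rightarrow> fam set \<Rightarrow> fam set set" where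
  "G_j d k A = {G \<in> dags d k. A \<subseteq> G}"

definition score_set :: "(fam \<Rightarrow> real) \<Rightarrow> fam set set \<Rightarrow> real" where
  "score_set Hh \<A> = Max (score Hh ` \<A>)"

definition eps_round :: "real \<Rightarrow> nat \<Rightarrow> real" where
  "eps_round eps1 t = eps1 / 2 ^ (t - 1)"

definition T_rounds :: "nat \<Rightarrow> real \<Rightarrow> real \<Rightarrow> nat" where
  "T_rounds d eps eps1 = nat \<lceil>log 2 (2 * real d * eps1 / eps)\<rceil>"

definition L_set :: "nat \<Rightarrow> nat \<Rightarrow> (fam \<Rightarrow> real) \<Rightarrow> real \<Rightarrow> fam set \<Rightarrow> fam set \<Rightarrow> fam set set set" where
  "L_set d k Hh \<theta> A G0 =
     {E \<in> ecs d k. E \<inter> G_j d k A \<noteq> {} \<and>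
        score_set Hh (ec_of d k G0 \<inter> G_j d k A) - score_set Hh (E \<inter> G_j d k A) \<le> \<theta>}"

definition accept_cond :: "nat \<Rightarrow> nat \<Rightarrow> (fam \<Rightarrow> real) \<Rightarrow> real \<Rightarrow> fam set \<Rightarrow> nat set \<Rightarrow> fam set \<Rightarrow> fam \<Rightarrow> bool" where
  "accept_cond d k Hh \<theta> A V G0 f \<longleftrightarrow>
     f \<in> \<Union>(ec_of d k G0 \<inter> G_j d k A) \<and> f \<in> F_act d k V \<and>
     (\<forall>E\<in>L_set d k Hh \<theta> A G0. f \<in> \<Union>(E \<inter> G_j d k A))"

definition is_iteration :: "nat \<Rightarrow> nat \<Rightarrow> (fam \<Rightarrow> real) \<Rightarrow> real \<Rightarrow> fam set \<Rightarrow> nat set \<Rightarrow> fam set \<Rightarrow> fam set \<Rightarrow> nat set \<Rightarrow> bool" where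
  "is_iteration d k Hh \<theta> A V G0 A' V' \<longleftrightarrow>
     G0 \<in> G_j d k A \<and> (\<forall>G\<in>G_j d k A. score Hh G \<le> score Hh G0) \<and>
     ((\<exists>f. accept_cond d k Hh \<theta> A V G0 f \<and> A' = insert f A \<and> V' = insert (fst f) V) \<or>
      ((\<forall>f. \<not> accept_cond d k Hh \<theta> A V G0 f) \<and> A' = A \<and> V' = V))"

definition round_start :: "(nat \<Rightarrow> nat) \<Rightarrow> nat \<Rightarrow> bool" where
  "round_start tr j \<longleftrightarrow> j = 1 \<or> tr (j - 1) \<noteq> tr j"

end

theory Submission
  imports Defs
begin

lemma finite_families: "finite (families d k)"
proof -
  have "families d k \<subseteq> {0..<d} \<times> Pow {0..<d}" unfolding families_def by auto
  then show ?thesis by (rule finite_subset) auto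
qed

lemma finite_dags: "finite (dags d k)"
proof -
  have "dags d k \<subseteq> Pow (families d k)" unfolding dags_def by auto
  then show ?thesis using finite_families by (metis finite_Pow_iff finite_subset)
qed

lemma dag_unique:
  assumes "G \<in> dags d k" "(i, P) \<in> G" "(i, Q) \<in> G" shows "P = Q"
proof -
  have "i < d" using assms unfolding dags_def families_def by auto
  then show ?thesis using assms unfolding dags_def by blast
qed

lemma dag_fin: assumes "G \<in> dags d k" shows "finite G"
proof -
  have "G \<subseteq> families d k" using assms unfolding dags_def by auto
  then show ?thesis by (rule finite_subset[OF _ finite_families])
qed

lemma diff_lemma:
  assumes G: "G \<in> dags d k" and AG: "A \<subseteq> G" and V: "V = fst ` A"
  shows "G - A \<subseteq> F_act d k V \<and> card (G - A) \<le> d - card V"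
proof
  show sub: "G - A \<subseteq> F_act d k V"
  proof
    fix f assume f: "f \<in> G - A"
    obtain i P where fe: "f = (i, P)" by fastforce
    have "i \<notin> V"
    proof
      assume "i \<in> V"
      then obtain Q where "(i, Q) \<in> A" using V by force
      then have "(i, Q) \<in> G" using AG by auto
      then have "P = Q" using dag_unique[OF G, of i P Q] f fe by auto
      then show False using f fe \<open>(i, Q) \<in> A\<close> by auto
    qed
    moreover have "f \<in> families d k" using f G unfolding dags_def by auto
    ultimately show "f \<in> F_act d k V" unfolding F_act_def fe by auto
  qed
  have inj: "inj_on fst G"
    by (rule inj_onI) (metis dag_unique[OF G] prod.collapse)
  have "fst ` (G - A) \<subseteq> {0..<d} - V" using sub unfolding F_act_def families_def by auto
  moreover have "V \<subseteq> {0..<d}" using V AG G unfolding dags_def families_def by auto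
  ultimately have "card (fst ` (G - A)) \<le> card ({0..<d} - V)"
    by (intro card_mono) auto
  also have "\<dots> = d - card V" using \<open>V \<subseteq> {0..<d}\<close>
    by (simp add: card_Diff_subset finite_subset)
  finally show "card (G - A) \<le> d - card V"
    using card_image[OF inj_on_subset[OF inj, of "G - A"]] by auto
qed

lemma score_split:
  assumes G: "G \<in> dags d k" and AG: "A \<subseteq> G" and V: "V = fst ` A"
    and bnd: "\<forall>f\<in>F_act d k V. abs (Hh f - H f) \<le> e" and e0: "0 \<le> e"
  shows "abs (score Hh G - score H G + (\<Sum>f\<in>A. Hh f - H f)) \<le> real (d - card V) * e"
proof -
  have fin: "finite G" using dag_fin[OF G] .
  have "score Hh G - score H G = - (\<Sum>f\<in>G. Hh f - H f)"
    unfolding score_def by (simp add: sum_subtractf)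
  also have "(\<Sum>f\<in>G. Hh f - H f) = (\<Sum>f\<in>A. Hh f - H f) + (\<Sum>f\<in>G - A. Hh f - H f)"
    using sum.subset_diff[OF AG fin, of "\<lambda>f. Hh f - H f"] by linarith
  finally have eq: "score Hh G - score H G + (\<Sum>f\<in>A. Hh f - H f) = - (\<Sum>f\<in>G - A. Hh f - H f)"
    by simp
  have D: "G - A \<subseteq> F_act d k V" "card (G - A) \<le> d - card V" using diff_lemma[OF G AG V] by auto
  have "abs (score Hh G - score H G + (\<Sum>f\<in>A. Hh f - H f)) = abs (\<Sum>f\<in>G - A. Hh f - H f)"
    unfolding eq by (rule abs_minus_cancel)
  also have "abs (\<Sum>f\<in>G - A. Hh f - H f) \<le> (\<Sum>f\<in>G - A. abs (Hh f - H f))" by (rule sum_abs)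
  also have "\<dots> \<le> (\<Sum>f\<in>G - A. e)" using D bnd by (intro sum_mono) auto
  also have "\<dots> = real (card (G - A)) * e" by simp
  also have "\<dots> \<le> real (d - card V) * e"
  proof -
    show ?thesis using D e0 by (intro mult_right_mono) auto
  qed
  finally show ?thesis .
qed


lemma markov_refl: "markov_equiv d G G"
  unfolding markov_equiv_def by simp

lemma dags_ne: "dags d k \<noteq> {}"
proof -
  let ?G = "(\<lambda>i. (i, {})) ` {0..<d} :: fam set"
  have e: "edges ?G = {}" unfolding edges_def by auto
  have a: "acyclic (edges ?G)" unfolding e by (simp add: acyclic_def)
  have "?G \<in> dags d k" unfolding dags_def families_def using a by (auto simp: image_iff)
  then show ?thesis by auto
qed

lemma G_star_ne: "G_star d k H \<noteq> {}"
proof -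
  have fin: "finite (score H ` dags d k)" using finite_dags by auto
  have ne: "score H ` dags d k \<noteq> {}" using dags_ne by auto
  have "S_star d k H \<in> score H ` dags d k" unfolding S_star_def using Max_in[OF fin ne] .
  then obtain G where "G \<in> dags d k" "score H G = S_star d k H" by auto
  then show ?thesis unfolding G_star_def by auto
qed

lemma S_star_ge: "G \<in> dags d k \<Longrightarrow> score H G \<le> S_star d k H"
  unfolding S_star_def using finite_dags by (intro Max_ge) auto

lemma step_lemma:
  assumes score_equiv: "\<forall>G\<in>dags d k. \<forall>G'\<in>dags d k. markov_equiv d G G' \<longrightarrow> score H G = score H G'"
    and GS: "G \<in> G_star d k H" and AG: "A \<subseteq> G" and V: "V = fst ` A"
    and it: "is_iteration d k Hh (real (d - card V) * e) A V G0 A' V'"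
    and bnd: "\<forall>f\<in>F_act d k V. abs (Hh f - H f) \<le> e / 2" and e0: "0 \<le> e"
  shows "G_star d k H \<inter> G_j d k A' \<noteq> {} \<and> V' = fst ` A'"
proof -
  have G0: "G0 \<in> G_j d k A" and mx: "\<forall>G\<in>G_j d k A. score Hh G \<le> score Hh G0"
    and cs: "(\<exists>f. accept_cond d k Hh (real (d - card V) * e) A V G0 f \<and> A' = insert f A \<and> V' = insert (fst f) V) \<or>
      ((\<forall>f. \<not> accept_cond d k Hh (real (d - card V) * e) A V G0 f) \<and> A' = A \<and> V' = V)"
    using it unfolding is_iteration_def by auto
  have Gd: "G \<in> dags d k" and GSc: "score H G = S_star d k H" using GS unfolding G_star_def by auto
  have G0d: "G0 \<in> dags d k" and AG0: "A \<subseteq> G0" using G0 unfolding G_j_def by auto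
  have GjG: "G \<in> G_j d k A" using Gd AG unfolding G_j_def by auto
  have Smax: "score H G0 \<le> score H G" using S_star_ge[OF G0d] GSc by simp
  have e2: "0 \<le> e / 2" using e0 by simp
  have s1: "abs (score Hh G - score H G + (\<Sum>f\<in>A. Hh f - H f)) \<le> real (d - card V) * (e / 2)"
    by (rule score_split[OF Gd AG V bnd e2])
  have s2: "abs (score Hh G0 - score H G0 + (\<Sum>f\<in>A. Hh f - H f)) \<le> real (d - card V) * (e / 2)"
    by (rule score_split[OF G0d AG0 V bnd e2])
  have diff: "score Hh G0 - score Hh G \<le> real (d - card V) * e"
    using s1 s2 Smax unfolding abs_le_iff by (simp add: field_simps)
  show ?thesis
    using cs
  proof
    assume "(\<forall>f. \<not> accept_cond d k Hh (real (d - card V) * e) A V G0 f) \<and> A' = A \<and> V' = V"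
    then show ?thesis using GS GjG V by auto
  next
    assume "\<exists>f. accept_cond d k Hh (real (d - card V) * e) A V G0 f \<and> A' = insert f A \<and> V' = insert (fst f) V"
    then obtain f where acc: "accept_cond d k Hh (real (d - card V) * e) A V G0 f"
      and A': "A' = insert f A" and V': "V' = insert (fst f) V" by blast
    define E where "E = ec_of d k G"
    have GE: "G \<in> E" unfolding E_def ec_of_def using Gd markov_refl by auto
    have finE: "finite (E \<inter> G_j d k A)"
      by (rule finite_subset[OF _ finite_dags]) (auto simp: E_def ec_of_def)
    have finE0: "finite (ec_of d k G0 \<inter> G_j d k A)"
      by (rule finite_subset[OF _ finite_dags]) (auto simp: ec_of_def)
    have G0E: "G0 \<in> ec_of d k G0 \<inter> G_j d k A" using G0 G0d markov_refl unfolding ec_of_def by auto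
    have sc1: "score_set Hh (ec_of d k G0 \<inter> G_j d k A) \<le> score Hh G0"
      unfolding score_set_def using finE0 G0E mx by (subst Max_le_iff) auto
    have sc2: "score Hh G \<le> score_set Hh (E \<inter> G_j d k A)"
      unfolding score_set_def using finE GE GjG by (intro Max_ge) auto
    have "E \<in> L_set d k Hh (real (d - card V) * e) A G0"
      unfolding L_set_def using GE GjG sc1 sc2 diff Gd
      by (auto simp: ecs_def E_def)
    then have "f \<in> \<Union>(E \<inter> G_j d k A)" using acc unfolding accept_cond_def by blast
    then obtain G' where G'E: "G' \<in> E" and G'j: "G' \<in> G_j d k A" and fG': "f \<in> G'" by blast
    have G'd: "G' \<in> dags d k" and me: "markov_equiv d G G'" using G'E unfolding E_def ec_of_def by auto
    have "score H G' = S_star d k H" using score_equiv Gd G'd me GSc by metis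
    then have "G' \<in> G_star d k H" using G'd unfolding G_star_def by auto
    moreover have "G' \<in> G_j d k A'" using G'j fG' unfolding A' G_j_def by auto
    ultimately show ?thesis using V V' A' by auto
  qed
qed

lemma T_bound:
  assumes "0 < eps" "0 < eps1" "c < d" "eps / real (d - c) < eps_round eps1 t" "1 \<le> t"
  shows "t \<le> T_rounds d eps eps1"
proof (rule ccontr)
  assume "\<not> t \<le> T_rounds d eps eps1"
  then have tT: "T_rounds d eps eps1 \<le> t - 1" by simp
  define x where "x = 2 * real d * eps1 / eps"
  have dpos: "0 < real d" using assms by simp
  have xpos: "0 < x" unfolding x_def using assms dpos by simp
  have "log 2 x \<le> real (T_rounds d eps eps1)" unfolding T_rounds_def x_def[symmetric]
    by (rule real_nat_ceiling_ge)
  then have "2 powr log 2 x \<le> 2 powr real (T_rounds d eps eps1)"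
    by (rule powr_mono) simp
  then have "x \<le> 2 powr real (T_rounds d eps eps1)"
    using xpos by simp
  also have "\<dots> = 2 ^ T_rounds d eps eps1" by (simp add: powr_realpow)
  also have "\<dots> \<le> (2::real) ^ (t - 1)" using tT by (intro power_increasing) auto
  finally have x2: "x \<le> 2 ^ (t - 1)" .
  have "eps_round eps1 t = eps1 / 2 ^ (t - 1)" unfolding eps_round_def ..
  also have "\<dots> \<le> eps1 / x" using x2 xpos assms by (intro divide_left_mono) auto
  also have "\<dots> = eps / (2 * real d)" unfolding x_def using assms dpos by (simp add: field_simps)
  also have "\<dots> < eps / real (d - c)"
  proof -
    have "0 < real (d - c)" "real (d - c) < 2 * real d" using assms by auto
    then show ?thesis using assms by (intro divide_strict_left_mono) auto
  qed
  finally show False using assms(4) by simp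
qed

theorem lemma2:
  fixes d k J :: nat and eps eps1 \<delta> :: real
    and H :: "fam \<Rightarrow> real" and Hh :: "nat \<Rightarrow> fam \<Rightarrow> real"
    and A :: "nat \<Rightarrow> fam set" and V :: "nat \<Rightarrow> nat set"
    and tr :: "nat \<Rightarrow> nat" and Gh :: "nat \<Rightarrow> fam set"
  assumes "1 \<le> k" and "0 < \<delta>" and "\<delta> < 1" and "0 < eps" and "0 < eps1"
    and score_equiv: "\<forall>G\<in>dags d k. \<forall>G'\<in>dags d k. markov_equiv d G G' \<longrightarrow> score H G = score H G'"
    and init: "A 1 = {}" "V 1 = {}" "tr 1 = 1"
    and iter: "\<forall>j\<in>{1..J}. is_iteration d k (Hh (tr j))
                 (real (d - card (V j)) * eps_round eps1 (tr j))
                 (A j) (V j) (Gh j) (A (Suc j)) (V (Suc j))"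
    and rounds: "\<forall>j\<in>{1..<J}. tr (Suc j) = (if A (Suc j) = A j then Suc (tr j) else tr j)"
    and guard: "\<forall>j\<in>{1..J}. round_start tr j \<longrightarrow>
                  card (V j) < d \<and> eps / real (d - card (V j)) < eps_round eps1 (tr j)"
    and event: "\<forall>j\<in>{1..J}. round_start tr j \<and> tr j \<in> {1..T_rounds d eps eps1} \<longrightarrow>
                  (\<forall>f\<in>F_act d k (V j). \<bar>Hh (tr j) f - H f\<bar> \<le> eps_round eps1 (tr j) / 2)"
  shows "\<forall>j\<in>{1..J}. G_star d k H \<inter> G_j d k (A j) \<noteq> {}"
proof -
  have trpos: "\<forall>n. Suc n \<le> J \<longrightarrow> 1 \<le> tr (Suc n)"
  proof
    fix n show "Suc n \<le> J \<longrightarrow> 1 \<le> tr (Suc n)"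
    proof (induction n)
      case 0 then show ?case using init by simp
    next
      case (Suc n)
      show ?case
      proof
        assume "Suc (Suc n) \<le> J"
        then have "Suc n \<in> {1..<J}" by simp
        then have "tr (Suc (Suc n)) \<ge> tr (Suc n)" using rounds by auto
        then show "1 \<le> tr (Suc (Suc n))" using Suc \<open>Suc (Suc n) \<le> J\<close> by simp
      qed
    qed
  qed
  have rs: "\<forall>f\<in>F_act d k (V j). abs (Hh (tr j) f - H f) \<le> eps_round eps1 (tr j) / 2"
    if j: "j \<in> {1..J}" and r: "round_start tr j" for j
  proof -
    have g: "card (V j) < d" "eps / real (d - card (V j)) < eps_round eps1 (tr j)"
      using guard j r by auto
    have "1 \<le> tr j" using trpos j by (cases j) auto
    then have "tr j \<le> T_rounds d eps eps1"
      using T_bound[OF assms(4) assms(5) g] by simp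
    then show ?thesis using event j r \<open>1 \<le> tr j\<close> by auto
  qed
  have bnd: "\<forall>n. Suc n \<le> J \<longrightarrow> (\<forall>f\<in>F_act d k (V (Suc n)). abs (Hh (tr (Suc n)) f - H f) \<le> eps_round eps1 (tr (Suc n)) / 2)"
  proof
    fix n show "Suc n \<le> J \<longrightarrow> (\<forall>f\<in>F_act d k (V (Suc n)). abs (Hh (tr (Suc n)) f - H f) \<le> eps_round eps1 (tr (Suc n)) / 2)"
    proof (induction n)
      case 0 then show ?case using rs[of 1] unfolding round_start_def by simp
    next
      case (Suc n)
      show ?case
      proof
        assume J: "Suc (Suc n) \<le> J"
        show "\<forall>f\<in>F_act d k (V (Suc (Suc n))). abs (Hh (tr (Suc (Suc n))) f - H f) \<le> eps_round eps1 (tr (Suc (Suc n))) / 2"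
        proof (cases "round_start tr (Suc (Suc n))")
          case True then show ?thesis using rs J by simp
        next
          case False
          then have tq: "tr (Suc n) = tr (Suc (Suc n))" unfolding round_start_def by simp
          have "is_iteration d k (Hh (tr (Suc n))) (real (d - card (V (Suc n))) * eps_round eps1 (tr (Suc n)))
                 (A (Suc n)) (V (Suc n)) (Gh (Suc n)) (A (Suc (Suc n))) (V (Suc (Suc n)))"
            using iter J by simp
          then have "V (Suc n) \<subseteq> V (Suc (Suc n))" unfolding is_iteration_def by auto
          then have "F_act d k (V (Suc (Suc n))) \<subseteq> F_act d k (V (Suc n))" unfolding F_act_def by auto
          then show ?thesis using Suc J tq by auto
        qed
      qed
    qed
  qed
  have inv: "\<forall>n. Suc n \<le> J \<longrightarrow> G_star d k H \<inter> G_j d k (A (Suc n)) \<noteq> {} \<and> V (Suc n) = fst ` A (Suc n)"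
  proof
    fix n show "Suc n \<le> J \<longrightarrow> G_star d k H \<inter> G_j d k (A (Suc n)) \<noteq> {} \<and> V (Suc n) = fst ` A (Suc n)"
    proof (induction n)
      case 0
      have "G_j d k {} = dags d k" unfolding G_j_def by auto
      then show ?case using init G_star_ne[of d k H] unfolding G_star_def by auto
    next
      case (Suc n)
      show ?case
      proof
        assume J: "Suc (Suc n) \<le> J"
        then obtain G where GS: "G \<in> G_star d k H" and GA: "G \<in> G_j d k (A (Suc n))"
          and V: "V (Suc n) = fst ` A (Suc n)" using Suc by auto
        have it: "is_iteration d k (Hh (tr (Suc n))) (real (d - card (V (Suc n))) * eps_round eps1 (tr (Suc n)))
                 (A (Suc n)) (V (Suc n)) (Gh (Suc n)) (A (Suc (Suc n))) (V (Suc (Suc n)))"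
          using iter J by simp
        have b: "\<forall>f\<in>F_act d k (V (Suc n)). abs (Hh (tr (Suc n)) f - H f) \<le> eps_round eps1 (tr (Suc n)) / 2"
          using bnd J by simp
        have e0: "0 \<le> eps_round eps1 (tr (Suc n))" unfolding eps_round_def using assms(5) by simp
        show "G_star d k H \<inter> G_j d k (A (Suc (Suc n))) \<noteq> {} \<and> V (Suc (Suc n)) = fst ` A (Suc (Suc n))"
          using step_lemma[OF score_equiv GS _ V it b e0] GA unfolding G_j_def by auto
      qed
    qed
  qed
  show ?thesis
  proof
    fix j assume "j \<in> {1..J}"
    then obtain n where "j = Suc n" "Suc n \<le> J" by (cases j) auto
    then show "G_star d k H \<inter> G_j d k (A j) \<noteq> {}" using inv by auto
  qed
qed

end
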